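(* Let $M$ be an end-decisive MM-QFA that accepts $L$ with bounded error and let $M'$ be an end-decisive MM-QFA that accepts $L'$ with bounded error. Then there exists an MM-QFA $M''$ that accepts $L\cup L'$ with bounded error.
   Context: A measure-many quantum finite automaton (MM-QFA) over $\Sigma$ is a tuple $(Q,\Sigma,\{U_\sigma\}_{\sigma\in\Sigma\cup\{\$\}},q_0,Q_{acc},Q_{rej})$ with $Q$ finite indexing an orthonormal basis of $\mathbb{C}^Q$, end-marker $\$\notin\Sigma$, unitary $U_\sigma$, initial state $q_0$, and $Q$ partitioned into $Q_{acc},Q_{rej},Q_{non}$ with orthogonal projections $P_{acc},P_{rej},P_{non}$. On input $x$ it processes $x\$$ maintaining $(\psi,p_{acc},p_{rej})$, initially $(|q_0\rangle,0,0)$; on reading $\sigma$: $\psi'=U_\sigma\psi$, $p_{acc}\mathrel{+}=\|P_{acc}\psi'\|^2$, $p_{rej}\mathrel{+}=\|P_{rej}\psi'\|^2$, $\psi\leftarrow P_{non}\psi'$; the acceptance probability $p(x)$ is the final $p_{acc}$. It is end-decisive if $P_{acc}\psi'=0$ after reading every non-end-marker symbol, on every input. It accepts $L$ with bounded error if for some $\lambda$ and $\epsilon>0$, $p(x)>\lambda+\epsilon$ for $x\in L$ and $p(x)<\lambda-\epsilon$ for $x\notin L$. *)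

theory Defs
  imports Complex_Main
begin

text \<open>The state set Q is {0..<dim}, indexing the
standard orthonormal basis of C^dim. Input symbols are Some a; the end-marker is None.
trans s is the matrix (i,j) of the unitary U_s.\<close>

datatype 'a mmqfa = MMQFA
  (dim: nat) (trans: "'a option \<Rightarrow> nat \<Rightarrow> nat \<Rightarrow> complex")
  (init: nat) (accs: "nat set") (rejs: "nat set")

definition unitary_mat :: "nat \<Rightarrow> (nat \<Rightarrow> nat \<Rightarrow> complex) \<Rightarrow> bool" where
  "unitary_mat n U \<longleftrightarrow>
     (\<forall>i<n. \<forall>j<n. (\<Sum>k<n. cnj (U k i) * U k j) = (if i = j then 1 else 0))"

definition wf_mmqfa :: "'a mmqfa \<Rightarrow> bool" where
  "wf_mmqfa M \<longleftrightarrow> init M < dim M \<and> accs M \<subseteq> {..<dim M} \<and> rejs M \<subseteq> {..<dim M}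
     \<and> accs M \<inter> rejs M = {} \<and> (\<forall>s. unitary_mat (dim M) (trans M s))"

definition mat_vec :: "nat \<Rightarrow> (nat \<Rightarrow> nat \<Rightarrow> complex) \<Rightarrow> (nat \<Rightarrow> complex) \<Rightarrow> (nat \<Rightarrow> complex)" where
  "mat_vec n U v = (\<lambda>i. if i < n then (\<Sum>j<n. U i j * v j) else 0)"

definition proj :: "nat set \<Rightarrow> (nat \<Rightarrow> complex) \<Rightarrow> (nat \<Rightarrow> complex)" where
  "proj S v = (\<lambda>i. if i \<in> S then v i else 0)"

definition norm2 :: "nat \<Rightarrow> (nat \<Rightarrow> complex) \<Rightarrow> real" where
  "norm2 n v = (\<Sum>i<n. (cmod (v i))\<^sup>2)"

definition non_states :: "'a mmqfa \<Rightarrow> nat set" where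
  "non_states M = {..<dim M} - accs M - rejs M"

definition init_vec :: "'a mmqfa \<Rightarrow> (nat \<Rightarrow> complex)" where
  "init_vec M = (\<lambda>i. if i = init M then 1 else 0)"

definition step :: "'a mmqfa \<Rightarrow> 'a option \<Rightarrow> (nat \<Rightarrow> complex) \<times> real \<times> real
                     \<Rightarrow> (nat \<Rightarrow> complex) \<times> real \<times> real" where
  "step M s cfg = (case cfg of (psi, pa, pr) \<Rightarrow>
     (let psi' = mat_vec (dim M) (trans M s) psi in
       (proj (non_states M) psi',
        pa + norm2 (dim M) (proj (accs M) psi'),
        pr + norm2 (dim M) (proj (rejs M) psi'))))"

definition run :: "'a mmqfa \<Rightarrow> 'a option list \<Rightarrow> (nat \<Rightarrow> complex) \<times> real \<times> real" where
  "run M ss = fold (step M) ss (init_vec M, 0, 0)"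

definition acc_prob :: "'a mmqfa \<Rightarrow> 'a list \<Rightarrow> real" where
  "acc_prob M x = fst (snd (run M (map Some x @ [None])))"

definition end_decisive :: "'a mmqfa \<Rightarrow> bool" where
  "end_decisive M \<longleftrightarrow> (\<forall>w a.
     proj (accs M) (mat_vec (dim M) (trans M (Some a)) (fst (run M (map Some w)))) = (\<lambda>_. 0))"

definition accepts_bounded :: "'a mmqfa \<Rightarrow> 'a list set \<Rightarrow> bool" where
  "accepts_bounded M L \<longleftrightarrow> (\<exists>lam eps. eps > 0 \<and>
     (\<forall>x. x \<in> L \<longrightarrow> acc_prob M x > lam + eps) \<and>
     (\<forall>x. x \<notin> L \<longrightarrow> acc_prob M x < lam - eps))"

end

theory Submission
  imports Defs
begin

definition mmul :: "nat \<Rightarrow> (nat\<Rightarrow>nat\<Rightarrow>complex) \<Rightarrow> (nat\<Rightarrow>nat\<Rightarrow>complex) \<Rightarrow> nat\<Rightarrow>nat\<Rightarrow>complex" where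
  "mmul n A B = (\<lambda>i j. \<Sum>k<n. A i k * B k j)"

lemma mat_vec_mmul: "mat_vec n (mmul n A B) v = mat_vec n A (mat_vec n B v)"
proof
  fix i
  show "mat_vec n (mmul n A B) v i = mat_vec n A (mat_vec n B v) i"
  proof (cases "i < n")
    case True
    have "(\<Sum>j<n. (\<Sum>k<n. A i k * B k j) * v j) = (\<Sum>j<n. \<Sum>k<n. A i k * (B k j * v j))"
      by (simp add: sum_distrib_right mult.assoc)
    also have "\<dots> = (\<Sum>k<n. \<Sum>j<n. A i k * (B k j * v j))" by (rule sum.swap)
    also have "\<dots> = (\<Sum>k<n. A i k * (\<Sum>j<n. B k j * v j))" by (simp add: sum_distrib_left)
    finally have "(\<Sum>j<n. (\<Sum>k<n. A i k * B k j) * v j) = (\<Sum>k<n. A i k * (\<Sum>j<n. B k j * v j))" .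
    then show ?thesis using True by (simp add: mat_vec_def mmul_def)
  qed (simp add: mat_vec_def)
qed

lemma sum_delta_mult: "(a::nat) < n \<Longrightarrow> (\<Sum>b<n. f b * (if a = b then 1 else 0)) = (f a::complex)"
proof -
  assume "a < n"
  have "(\<Sum>b<n. f b * (if a = b then 1 else 0)) = (\<Sum>b<n. if a = b then f b else 0)"
    by (rule sum.cong) auto
  also have "\<dots> = f a" using \<open>a < n\<close> by (subst sum.delta') auto
  finally show ?thesis .
qed

lemma sum3_swap:
  "(\<Sum>k<n. \<Sum>a<n. \<Sum>b<n. (f a b :: complex) * g k a b) = (\<Sum>a<n. \<Sum>b<n. f a b * (\<Sum>k<n. g k a b))"
proof -
  have "(\<Sum>k<n. \<Sum>a<n. \<Sum>b<n. f a b * g k a b) = (\<Sum>a<n. \<Sum>k<n. \<Sum>b<n. f a b * g k a b)"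
    by (rule sum.swap)
  also have "\<dots> = (\<Sum>a<n. \<Sum>b<n. \<Sum>k<n. f a b * g k a b)"
    by (rule sum.cong[OF refl], rule sum.swap)
  also have "\<dots> = (\<Sum>a<n. \<Sum>b<n. f a b * (\<Sum>k<n. g k a b))"
    by (simp add: sum_distrib_left)
  finally show ?thesis .
qed

lemma unitary_mmul:
  assumes A: "unitary_mat n A" and B: "unitary_mat n B"
  shows "unitary_mat n (mmul n A B)"
  unfolding unitary_mat_def
proof (intro allI impI)
  fix i j assume i: "i < n" and j: "j < n"
  have "(\<Sum>k<n. cnj (mmul n A B k i) * mmul n A B k j)
      = (\<Sum>k<n. \<Sum>a<n. \<Sum>b<n. (cnj (B a i) * B b j) * (cnj (A k a) * A k b))"
    unfolding mmul_def cnj_sum complex_cnj_mult sum_product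
    by (intro sum.cong refl) (simp add: ac_simps)
  also have "\<dots> = (\<Sum>a<n. \<Sum>b<n. (cnj (B a i) * B b j) * (\<Sum>k<n. cnj (A k a) * A k b))"
    by (rule sum3_swap)
  also have "\<dots> = (\<Sum>a<n. \<Sum>b<n. (cnj (B a i) * B b j) * (if a = b then 1 else 0))"
    using A unfolding unitary_mat_def by (intro sum.cong refl) simp
  also have "\<dots> = (\<Sum>a<n. cnj (B a i) * B a j)"
    by (intro sum.cong refl, subst sum_delta_mult) auto
  also have "\<dots> = (if i = j then 1 else 0)" using B i j unfolding unitary_mat_def by simp
  finally show "(\<Sum>k<n. cnj (mmul n A B k i) * mmul n A B k j) = (if i = j then 1 else 0)" .
qed

lemma norm2_complex: "complex_of_real (norm2 n v) = (\<Sum>i<n. cnj (v i) * v i)"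
  unfolding norm2_def of_real_sum
  by (rule sum.cong[OF refl]) (simp add: complex_norm_square[symmetric] mult.commute del: of_real_power)

lemma norm2_unitary:
  assumes U: "unitary_mat n U"
  shows "norm2 n (mat_vec n U v) = norm2 n v"
proof -
  have "complex_of_real (norm2 n (mat_vec n U v)) = (\<Sum>i<n. cnj (\<Sum>j<n. U i j * v j) * (\<Sum>l<n. U i l * v l))"
    by (simp add: norm2_complex mat_vec_def)
  also have "\<dots> = (\<Sum>i<n. \<Sum>j<n. \<Sum>l<n. (cnj (v j) * v l) * (cnj (U i j) * U i l))"
    unfolding cnj_sum complex_cnj_mult sum_product
    by (intro sum.cong refl) (simp add: ac_simps)
  also have "\<dots> = (\<Sum>j<n. \<Sum>l<n. (cnj (v j) * v l) * (\<Sum>i<n. cnj (U i j) * U i l))"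
    by (rule sum3_swap)
  also have "\<dots> = (\<Sum>j<n. \<Sum>l<n. (cnj (v j) * v l) * (if j = l then 1 else 0))"
    using U unfolding unitary_mat_def by (intro sum.cong refl) simp
  also have "\<dots> = (\<Sum>j<n. cnj (v j) * v j)"
    by (intro sum.cong refl, subst sum_delta_mult) auto
  also have "\<dots> = complex_of_real (norm2 n v)" by (simp add: norm2_complex)
  finally show ?thesis by simp
qed


lemma sum_split_add: "(\<Sum>i<(n1::nat)+n2. f i) = (\<Sum>i<n1. f i) + (\<Sum>i<n2. (f (n1+i) :: 'b::comm_monoid_add))"
  by (induct n2) (simp_all add: add_ac)

lemma sum_split_mult: "(\<Sum>x<(n1::nat)*n2. f x) = (\<Sum>i<n1. \<Sum>j<n2. (f (i*n2+j) :: 'b::comm_monoid_add))"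
proof (induct n1)
  case (Suc n1)
  have "(\<Sum>x<Suc n1*n2. f x) = (\<Sum>x<n1*n2 + n2. f x)" by (simp add: add.commute)
  also have "\<dots> = (\<Sum>x<n1*n2. f x) + (\<Sum>j<n2. f (n1*n2+j))" by (rule sum_split_add)
  finally show ?case using Suc by simp
qed simp

definition ds :: "nat \<Rightarrow> nat \<Rightarrow> (nat\<Rightarrow>complex) \<Rightarrow> (nat\<Rightarrow>complex) \<Rightarrow> nat \<Rightarrow> complex" where
  "ds n1 n2 u v = (\<lambda>i. if i < n1 then u i else if i < n1+n2 then v (i - n1) else 0)"

definition blk :: "nat \<Rightarrow> (nat\<Rightarrow>nat\<Rightarrow>complex) \<Rightarrow> (nat\<Rightarrow>nat\<Rightarrow>complex) \<Rightarrow> nat\<Rightarrow>nat\<Rightarrow>complex" where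
  "blk n1 A B = (\<lambda>i j. if i < n1 \<and> j < n1 then A i j else if n1 \<le> i \<and> n1 \<le> j then B (i-n1) (j-n1) else 0)"

lemma mat_vec_blk: "mat_vec (n1+n2) (blk n1 A B) (ds n1 n2 u v) = ds n1 n2 (mat_vec n1 A u) (mat_vec n2 B v)"
proof
  fix i
  show "mat_vec (n1+n2) (blk n1 A B) (ds n1 n2 u v) i = ds n1 n2 (mat_vec n1 A u) (mat_vec n2 B v) i"
  proof (cases "i < n1")
    case True
    then show ?thesis by (simp add: mat_vec_def sum_split_add blk_def ds_def)
  next
    case False
    then show ?thesis by (simp add: mat_vec_def sum_split_add blk_def ds_def)
  qed
qed

lemma unitary_blk:
  assumes A: "unitary_mat n1 A" and B: "unitary_mat n2 B"
  shows "unitary_mat (n1+n2) (blk n1 A B)"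
  unfolding unitary_mat_def
proof (intro allI impI)
  fix i j assume i: "i < n1+n2" and j: "j < n1+n2"
  have e: "(\<Sum>k<n1+n2. cnj (blk n1 A B k i) * blk n1 A B k j) =
     (\<Sum>k<n1. cnj (blk n1 A B k i) * blk n1 A B k j) + (\<Sum>k<n2. cnj (blk n1 A B (n1+k) i) * blk n1 A B (n1+k) j)"
    by (rule sum_split_add)
  show "(\<Sum>k<n1+n2. cnj (blk n1 A B k i) * blk n1 A B k j) = (if i = j then 1 else 0)"
  proof (cases "i < n1")
    case True
    note ti = True
    show ?thesis
    proof (cases "j < n1")
      case True
      then show ?thesis unfolding e using A ti unfolding unitary_mat_def by (simp add: blk_def)
    next
      case False
      then show ?thesis unfolding e using ti by (simp add: blk_def)
    qed
  next
    case False
    note fi = False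
    show ?thesis
    proof (cases "j < n1")
      case True
      then show ?thesis unfolding e using fi by (simp add: blk_def)
    next
      case False
      have "(\<Sum>k<n2. cnj (B k (i-n1)) * B k (j-n1)) = (if i - n1 = j - n1 then 1 else 0)"
        using B i j fi False unfolding unitary_mat_def by simp
      moreover have "i - n1 = j - n1 \<longleftrightarrow> i = j" using fi False by arith
      ultimately show ?thesis unfolding e using fi False by (simp add: blk_def)
    qed
  qed
qed

lemma proj_ds:
  assumes "S \<subseteq> {..<n1}"
  shows "proj (S \<union> (\<lambda>i. n1+i) ` T) (ds n1 n2 u v) = ds n1 n2 (proj S u) (proj T v)"
proof
  fix i
  show "proj (S \<union> (\<lambda>i. n1+i) ` T) (ds n1 n2 u v) i = ds n1 n2 (proj S u) (proj T v) i"
  proof (cases "i < n1")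
    case True
    then show ?thesis by (auto simp: proj_def ds_def)
  next
    case False
    then have "i \<notin> S" using assms by auto
    moreover have "i \<in> (\<lambda>i. n1+i) ` T \<longleftrightarrow> i - n1 \<in> T" using False by force
    ultimately show ?thesis using False by (auto simp: proj_def ds_def)
  qed
qed

lemma norm2_ds: "norm2 (n1+n2) (ds n1 n2 u v) = norm2 n1 u + norm2 n2 v"
  by (simp add: norm2_def sum_split_add ds_def)

definition sc :: "complex \<Rightarrow> (nat\<Rightarrow>complex) \<Rightarrow> nat \<Rightarrow> complex" where
  "sc c v = (\<lambda>i. c * v i)"

lemma mat_vec_sc: "mat_vec n U (sc c v) = sc c (mat_vec n U v)"
  by (auto simp: mat_vec_def sc_def sum_distrib_left ac_simps)

lemma proj_sc: "proj S (sc c v) = sc c (proj S v)"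
  by (auto simp: proj_def sc_def)

lemma norm2_sc: "norm2 n (sc c v) = (cmod c)^2 * norm2 n v"
  by (simp add: norm2_def sc_def norm_mult power_mult_distrib sum_distrib_left)

definition tm :: "nat \<Rightarrow> (nat\<Rightarrow>nat\<Rightarrow>complex) \<Rightarrow> (nat\<Rightarrow>nat\<Rightarrow>complex) \<Rightarrow> nat\<Rightarrow>nat\<Rightarrow>complex" where
  "tm n2 A B = (\<lambda>x y. A (x div n2) (y div n2) * B (x mod n2) (y mod n2))"

definition tv :: "nat \<Rightarrow> nat \<Rightarrow> (nat\<Rightarrow>complex) \<Rightarrow> (nat\<Rightarrow>complex) \<Rightarrow> nat \<Rightarrow> complex" where
  "tv n1 n2 u v = (\<lambda>x. if x < n1*n2 then u (x div n2) * v (x mod n2) else 0)"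

definition pset :: "nat \<Rightarrow> nat \<Rightarrow> nat set \<Rightarrow> nat set \<Rightarrow> nat set" where
  "pset n1 n2 S T = {x. x < n1*n2 \<and> x div n2 \<in> S \<and> x mod n2 \<in> T}"

lemma idx_div: "(j::nat) < n2 \<Longrightarrow> (i*n2+j) div n2 = i"
  by simp
lemma idx_mod: "(j::nat) < n2 \<Longrightarrow> (i*n2+j) mod n2 = j"
  by simp
lemma idx_lt: "(i::nat) < n1 \<Longrightarrow> j < n2 \<Longrightarrow> i*n2+j < n1*(n2::nat)"
proof -
  assume "i < n1" "j < n2"
  then have "i*n2+j < i*n2 + n2" by simp
  also have "\<dots> = (Suc i)*n2" by simp
  also have "\<dots> \<le> n1*n2" using \<open>i < n1\<close> by (intro mult_right_mono) auto
  finally show ?thesis .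
qed

lemma idx_lt2: "(i::nat) < n1 \<Longrightarrow> j < n2 \<Longrightarrow> j + i*n2 < n1*(n2::nat)"
  using idx_lt[of i n1 j n2] by (simp add: add.commute)

lemma div_lt: "x < n1*n2 \<Longrightarrow> x div n2 < (n1::nat)"
  by (simp add: less_mult_imp_div_less)
lemma mod_lt: "x < n1*n2 \<Longrightarrow> x mod n2 < (n2::nat)"
  by (metis mod_less_divisor mult_0_right not_less_zero gr0I)

lemma mat_vec_tm: "mat_vec (n1*n2) (tm n2 A B) (tv n1 n2 u v) = tv n1 n2 (mat_vec n1 A u) (mat_vec n2 B v)"
proof
  fix x
  show "mat_vec (n1*n2) (tm n2 A B) (tv n1 n2 u v) x = tv n1 n2 (mat_vec n1 A u) (mat_vec n2 B v) x"
  proof (cases "x < n1*n2")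
    case True
    have "(\<Sum>y<n1*n2. tm n2 A B x y * tv n1 n2 u v y)
        = (\<Sum>i<n1. \<Sum>j<n2. tm n2 A B x (i*n2+j) * tv n1 n2 u v (i*n2+j))"
      by (rule sum_split_mult)
    also have "\<dots> = (\<Sum>i<n1. \<Sum>j<n2. (A (x div n2) i * u i) * (B (x mod n2) j * v j))"
      by (intro sum.cong refl) (simp add: tm_def tv_def idx_lt idx_lt2 ac_simps)
    also have "\<dots> = (\<Sum>i<n1. A (x div n2) i * u i) * (\<Sum>j<n2. B (x mod n2) j * v j)"
      by (simp add: sum_product)
    finally show ?thesis using True div_lt[OF True] mod_lt[OF True]
      by (simp add: mat_vec_def tv_def)
  qed (simp add: mat_vec_def tv_def)
qed

lemma proj_tv: "proj (pset n1 n2 S T) (tv n1 n2 u v) = tv n1 n2 (proj S u) (proj T v)"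
  by (auto simp: proj_def tv_def pset_def)

lemma norm2_tv: "norm2 (n1*n2) (tv n1 n2 u v) = norm2 n1 u * norm2 n2 v"
proof -
  have "norm2 (n1*n2) (tv n1 n2 u v) = (\<Sum>i<n1. \<Sum>j<n2. (cmod (tv n1 n2 u v (i*n2+j)))^2)"
    unfolding norm2_def by (rule sum_split_mult)
  also have "\<dots> = (\<Sum>i<n1. \<Sum>j<n2. (cmod (u i))^2 * (cmod (v j))^2)"
    by (intro sum.cong refl) (simp add: tv_def idx_lt idx_lt2 norm_mult power_mult_distrib)
  also have "\<dots> = norm2 n1 u * norm2 n2 v"
    by (simp add: norm2_def sum_product)
  finally show ?thesis .
qed

lemma unitary_tm:
  assumes A: "unitary_mat n1 A" and B: "unitary_mat n2 B"
  shows "unitary_mat (n1*n2) (tm n2 A B)"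
  unfolding unitary_mat_def
proof (intro allI impI)
  fix x y assume x: "x < n1*n2" and y: "y < n1*n2"
  have "(\<Sum>z<n1*n2. cnj (tm n2 A B z x) * tm n2 A B z y)
      = (\<Sum>i<n1. \<Sum>j<n2. cnj (tm n2 A B (i*n2+j) x) * tm n2 A B (i*n2+j) y)"
    by (rule sum_split_mult)
  also have "\<dots> = (\<Sum>i<n1. \<Sum>j<n2. (cnj (A i (x div n2)) * A i (y div n2)) * (cnj (B j (x mod n2)) * B j (y mod n2)))"
    by (intro sum.cong refl) (simp add: tm_def ac_simps)
  also have "\<dots> = (\<Sum>i<n1. cnj (A i (x div n2)) * A i (y div n2)) * (\<Sum>j<n2. cnj (B j (x mod n2)) * B j (y mod n2))"
    by (simp add: sum_product)
  also have "\<dots> = (if x div n2 = y div n2 then 1 else 0) * (if x mod n2 = y mod n2 then 1 else 0)"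
    using A B div_lt[OF x] div_lt[OF y] mod_lt[OF x] mod_lt[OF y] unfolding unitary_mat_def by simp
  also have "\<dots> = (if x = y then 1 else 0)"
  proof -
    have "(x div n2 = y div n2 \<and> x mod n2 = y mod n2) = (x = y)" by (metis div_mult_mod_eq)
    then show ?thesis by auto
  qed
  finally show "(\<Sum>z<n1*n2. cnj (tm n2 A B z x) * tm n2 A B z y) = (if x = y then 1 else 0)" .
qed


definition rot :: "nat \<Rightarrow> nat \<Rightarrow> complex \<Rightarrow> complex \<Rightarrow> nat \<Rightarrow> nat \<Rightarrow> complex" where
  "rot a b c s = (\<lambda>i j. if i = a \<and> j = a then c else if i = b \<and> j = a then s
      else if i = a \<and> j = b then -s else if i = b \<and> j = b then c else if i = j then 1 else 0)"

lemma sum_ab: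
  assumes "(a::nat) < n" "b < n" "a \<noteq> b"
  shows "(\<Sum>k<n. f k) = f a + f b + (\<Sum>k\<in>{..<n}-{a,b}. (f k :: complex))"
proof -
  have "(\<Sum>k<n. f k) = f a + (\<Sum>k\<in>{..<n}-{a}. f k)"
    using assms by (subst sum.remove[of _ a]) auto
  also have "(\<Sum>k\<in>{..<n}-{a}. f k) = f b + (\<Sum>k\<in>{..<n}-{a}-{b}. f k)"
    using assms by (subst sum.remove[of _ b]) auto
  also have "{..<n}-{a}-{b} = {..<n}-{a,b}" by auto
  finally show ?thesis by (simp add: add.assoc)
qed

lemma rot_off: "j \<noteq> a \<Longrightarrow> j \<noteq> b \<Longrightarrow> rot a b c s i j = (if i = j then 1 else 0)"
  by (auto simp: rot_def)
lemma rot_off2: "i \<noteq> a \<Longrightarrow> i \<noteq> b \<Longrightarrow> rot a b c s i j = (if i = j then 1 else 0)"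
  by (auto simp: rot_def)

lemma sum_rest_delta:
  "(\<Sum>k\<in>{..<(n::nat)}-{a,b}. if i = k then (g k::complex) else 0) = (if i < n \<and> i \<noteq> a \<and> i \<noteq> b then g i else 0)"
  by (subst sum.delta') auto

lemma mat_vec_rot:
  assumes ab: "a < n" "b < n" "a \<noteq> b"
  shows "mat_vec n (rot a b c s) y = (\<lambda>i. if i < n then (if i = a then c * y a - s * y b
            else if i = b then s * y a + c * y b else y i) else 0)"
proof
  fix i
  show "mat_vec n (rot a b c s) y i = (if i < n then (if i = a then c * y a - s * y b
            else if i = b then s * y a + c * y b else y i) else 0)"
  proof (cases "i < n")
    case True
    have "(\<Sum>j<n. rot a b c s i j * y j) = rot a b c s i a * y a + rot a b c s i b * y b
        + (\<Sum>j\<in>{..<n}-{a,b}. rot a b c s i j * y j)"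
      by (rule sum_ab[OF ab])
    also have "(\<Sum>j\<in>{..<n}-{a,b}. rot a b c s i j * y j) = (\<Sum>j\<in>{..<n}-{a,b}. if i = j then y j else 0)"
      by (rule sum.cong) (auto simp: rot_off)
    also have "\<dots> = (if i < n \<and> i \<noteq> a \<and> i \<noteq> b then y i else 0)"
      by (rule sum_rest_delta)
    finally show ?thesis using True ab by (auto simp: mat_vec_def rot_def)
  qed (simp add: mat_vec_def)
qed

lemma unitary_rot:
  assumes ab: "a < n" "b < n" "a \<noteq> b" and cs: "cnj c = c" "cnj s = s" "c * c + s * s = 1"
  shows "unitary_mat n (rot a b c s)"
  unfolding unitary_mat_def
proof (intro allI impI)
  fix i j assume i: "i < n" and j: "j < n"
  have "(\<Sum>k<n. cnj (rot a b c s k i) * rot a b c s k j) = cnj (rot a b c s a i) * rot a b c s a j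
      + cnj (rot a b c s b i) * rot a b c s b j + (\<Sum>k\<in>{..<n}-{a,b}. cnj (rot a b c s k i) * rot a b c s k j)"
    by (rule sum_ab[OF ab])
  also have "(\<Sum>k\<in>{..<n}-{a,b}. cnj (rot a b c s k i) * rot a b c s k j)
      = (\<Sum>k\<in>{..<n}-{a,b}. if i = k then (if k = j then 1 else 0) else 0)"
    by (rule sum.cong) (auto simp: rot_off2)
  also have "\<dots> = (if i < n \<and> i \<noteq> a \<and> i \<noteq> b then (if i = j then 1 else 0) else 0)"
    by (rule sum_rest_delta)
  finally show "(\<Sum>k<n. cnj (rot a b c s k i) * rot a b c s k j) = (if i = j then 1 else 0)"
    using i j ab cs by (auto simp: rot_def algebra_simps)
qed

lemma rot_inv:
  assumes ab: "a < n" "b < n" "a \<noteq> b" and cs: "c * c + s * s = 1" and y: "\<forall>i\<ge>n. y i = 0"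
  shows "mat_vec n (rot a b c (-s)) (mat_vec n (rot a b c s) y) = y"
proof
  fix i
  show "mat_vec n (rot a b c (-s)) (mat_vec n (rot a b c s) y) i = y i"
  proof (cases "i < n")
    case True
    have "c * (c * y a - s * y b) - - s * (s * y a + c * y b) = (c * c + s * s) * y a"
      by (simp add: algebra_simps)
    moreover have "- s * (c * y a - s * y b) + c * (s * y a + c * y b) = (c * c + s * s) * y b"
      by (simp add: algebra_simps)
    ultimately show ?thesis using True ab cs by (simp add: mat_vec_rot)
  next
    case False
    then show ?thesis using y by (simp add: mat_vec_def)
  qed
qed

lemma rot_fix:
  assumes ab: "a < n" "b < n" "a \<noteq> b" and y: "\<forall>i\<ge>n. y i = 0" "y a = 0" "y b = 0"
  shows "mat_vec n (rot a b c s) y = y"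
proof
  fix i show "mat_vec n (rot a b c s) y i = y i"
    using ab y by (cases "i < n") (auto simp: mat_vec_rot)
qed

lemma proj_rot:
  assumes ab: "a < n" "b < n" "a \<noteq> b" and S: "(a \<in> S) = (b \<in> S)"
  shows "proj S (mat_vec n (rot a b c s) y) = mat_vec n (rot a b c s) (proj S y)"
proof
  fix i show "proj S (mat_vec n (rot a b c s) y) i = mat_vec n (rot a b c s) (proj S y) i"
    using ab S by (cases "i < n") (auto simp: mat_vec_rot proj_def)
qed

lemma run_snoc: "run M (ss @ [s]) = step M s (run M ss)"
  by (simp add: run_def)

lemma run_Nil: "run M [] = (init_vec M, 0, 0)"
  by (simp add: run_def)

lemma mat_vec_supp: "i \<ge> n \<Longrightarrow> mat_vec n U v i = 0"
  by (simp add: mat_vec_def)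

lemma run_supp:
  assumes "wf_mmqfa M" "i \<ge> dim M"
  shows "fst (run M ss) i = 0"
proof (induct ss rule: rev_induct)
  case Nil
  then show ?case using assms by (auto simp: run_Nil init_vec_def wf_mmqfa_def)
next
  case (snoc s ss)
  then show ?case using assms
    by (auto simp: run_snoc step_def proj_def mat_vec_supp Let_def split: prod.splits)
qed

lemma ed_pa:
  assumes "end_decisive M"
  shows "fst (snd (run M (map Some w))) = 0"
proof (induct w rule: rev_induct)
  case Nil
  then show ?case by (simp add: run_Nil)
next
  case (snoc x xs)
  have z: "proj (accs M) (mat_vec (dim M) (trans M (Some x)) (fst (run M (map Some xs)))) = (\<lambda>_. 0)"
    using assms unfolding end_decisive_def by blast
  have "norm2 (dim M) (\<lambda>_. 0) = 0" by (simp add: norm2_def)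
  then show ?case using snoc z
    by (auto simp: run_snoc step_def Let_def split: prod.splits)
qed

lemma acc_prob_ed:
  assumes "end_decisive M"
  shows "acc_prob M x = norm2 (dim M) (proj (accs M) (mat_vec (dim M) (trans M None) (fst (run M (map Some x)))))"
  using ed_pa[OF assms, of x]
  by (auto simp: acc_prob_def run_snoc step_def Let_def split: prod.splits)


definition tens :: "'a mmqfa \<Rightarrow> 'a mmqfa \<Rightarrow> 'a mmqfa" where
  "tens A B = MMQFA (dim A * dim B) (\<lambda>s. tm (dim B) (trans A s) (trans B s)) (init A * dim B + init B)
     (pset (dim A) (dim B) (accs A) (accs B))
     ({..<dim A * dim B} - pset (dim A) (dim B) (accs A) (accs B) - pset (dim A) (dim B) (non_states A) (non_states B))"

lemma tens_sel[simp]: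
  "dim (tens A B) = dim A * dim B"
  "trans (tens A B) s = tm (dim B) (trans A s) (trans B s)"
  "init (tens A B) = init A * dim B + init B"
  "accs (tens A B) = pset (dim A) (dim B) (accs A) (accs B)"
  by (simp_all add: tens_def)

lemma non_tens:
  assumes "wf_mmqfa A"
  shows "non_states (tens A B) = pset (dim A) (dim B) (non_states A) (non_states B)"
  using assms unfolding non_states_def tens_def pset_def wf_mmqfa_def by auto

lemma wf_tens:
  assumes A: "wf_mmqfa A" and B: "wf_mmqfa B"
  shows "wf_mmqfa (tens A B)"
  using A B unitary_tm idx_lt unfolding wf_mmqfa_def tens_def pset_def by auto

lemma init_tens:
  assumes A: "wf_mmqfa A" and B: "wf_mmqfa B"
  shows "init_vec (tens A B) = tv (dim A) (dim B) (init_vec A) (init_vec B)"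
proof
  fix x
  have iB: "init B < dim B" and iA: "init A < dim A" using A B by (auto simp: wf_mmqfa_def)
  have lt: "init A * dim B + init B < dim A * dim B" using idx_lt[OF iA iB] .
  show "init_vec (tens A B) x = tv (dim A) (dim B) (init_vec A) (init_vec B) x"
  proof (cases "x < dim A * dim B")
    case True
    have "(x = init A * dim B + init B) = (x div dim B = init A \<and> x mod dim B = init B)"
      using iB by (metis div_mult_mod_eq idx_div idx_mod mult.commute)
    then show ?thesis using True by (simp add: init_vec_def tv_def)
  next
    case False
    then show ?thesis using lt by (auto simp: init_vec_def tv_def)
  qed
qed

lemma tv_zero: "tv n1 n2 (\<lambda>_. 0) v = (\<lambda>_. 0)"
  by (rule ext) (simp add: tv_def)

lemma norm2_zero: "norm2 n (\<lambda>_. 0) = 0"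
  by (simp add: norm2_def)

lemma run_tens:
  assumes A: "wf_mmqfa A" and B: "wf_mmqfa B" and EA: "end_decisive A"
  shows "fst (run (tens A B) (map Some w)) = tv (dim A) (dim B) (fst (run A (map Some w))) (fst (run B (map Some w)))
       \<and> fst (snd (run (tens A B) (map Some w))) = 0"
proof (induct w rule: rev_induct)
  case Nil
  then show ?case using init_tens[OF A B] by (simp add: run_Nil)
next
  case (snoc x xs)
  define psA where "psA = fst (run A (map Some xs))"
  define psB where "psB = fst (run B (map Some xs))"
  have z: "proj (accs A) (mat_vec (dim A) (trans A (Some x)) psA) = (\<lambda>_. 0)"
    using EA unfolding end_decisive_def psA_def by blast
  obtain pT aT rT where rT: "run (tens A B) (map Some xs) = (pT, aT, rT)" by (cases "run (tens A B) (map Some xs)") auto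
  have pT: "pT = tv (dim A) (dim B) psA psB" and aT: "aT = 0" using snoc rT psA_def psB_def by auto
  have mv: "mat_vec (dim A * dim B) (tm (dim B) (trans A (Some x)) (trans B (Some x))) pT
     = tv (dim A) (dim B) (mat_vec (dim A) (trans A (Some x)) psA) (mat_vec (dim B) (trans B (Some x)) psB)"
    unfolding pT by (rule mat_vec_tm)
  have e1: "run (tens A B) (map Some (xs @ [x])) = step (tens A B) (Some x) (pT, aT, rT)"
    using rT by (simp add: run_snoc)
  have eA: "fst (run A (map Some (xs @ [x]))) = proj (non_states A) (mat_vec (dim A) (trans A (Some x)) psA)"
    by (simp add: run_snoc step_def psA_def Let_def split: prod.splits)
  have eB: "fst (run B (map Some (xs @ [x]))) = proj (non_states B) (mat_vec (dim B) (trans B (Some x)) psB)"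
    by (simp add: run_snoc step_def psB_def Let_def split: prod.splits)
  show ?case
    unfolding e1 eA eB
    by (simp add: step_def Let_def mv non_tens[OF A] proj_tv z tv_zero norm2_zero aT)
qed

lemma ed_tens:
  assumes A: "wf_mmqfa A" and B: "wf_mmqfa B" and EA: "end_decisive A"
  shows "end_decisive (tens A B)"
  unfolding end_decisive_def
proof (intro allI)
  fix w a
  have z: "proj (accs A) (mat_vec (dim A) (trans A (Some a)) (fst (run A (map Some w)))) = (\<lambda>_. 0)"
    using EA unfolding end_decisive_def by blast
  show "proj (accs (tens A B)) (mat_vec (dim (tens A B)) (trans (tens A B) (Some a)) (fst (run (tens A B) (map Some w)))) = (\<lambda>_. 0)"
    using run_tens[OF A B EA, of w] by (simp add: mat_vec_tm proj_tv z tv_zero)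
qed

lemma acc_tens:
  assumes A: "wf_mmqfa A" and B: "wf_mmqfa B" and EA: "end_decisive A" and EB: "end_decisive B"
  shows "acc_prob (tens A B) x = acc_prob A x * acc_prob B x"
proof -
  have ET: "end_decisive (tens A B)" by (rule ed_tens[OF A B EA])
  show ?thesis
    unfolding acc_prob_ed[OF ET] acc_prob_ed[OF EA] acc_prob_ed[OF EB]
    using run_tens[OF A B EA, of x] by (simp add: mat_vec_tm proj_tv norm2_tv)
qed

fun tpow :: "'a mmqfa \<Rightarrow> nat \<Rightarrow> 'a mmqfa" where
  "tpow A 0 = A"
| "tpow A (Suc k) = tens (tpow A k) A"

lemma tpow_props:
  assumes A: "wf_mmqfa A" and EA: "end_decisive A"
  shows "wf_mmqfa (tpow A k) \<and> end_decisive (tpow A k) \<and> (\<forall>x. acc_prob (tpow A k) x = acc_prob A x ^ Suc k)"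
proof (induct k)
  case 0
  then show ?case using A EA by simp
next
  case (Suc k)
  then have W: "wf_mmqfa (tpow A k)" and E: "end_decisive (tpow A k)"
    and P: "\<And>x. acc_prob (tpow A k) x = acc_prob A x ^ Suc k" by auto
  have "\<forall>x. acc_prob (tpow A (Suc k)) x = acc_prob A x ^ Suc (Suc k)"
    using acc_tens[OF W A E EA] P by (simp add: mult.commute)
  then show ?case using wf_tens[OF W A] ed_tens[OF W A E] by simp
qed


(* wrapping: make the initial state non-halting *)
definition wrap :: "'a mmqfa \<Rightarrow> 'a mmqfa" where
  "wrap A = MMQFA (dim A + 1) (\<lambda>s. mmul (dim A + 1) (blk (dim A) (trans A s) (\<lambda>_ _. 1)) (rot (init A) (dim A) 0 (-1)))
     (dim A) (accs A) (rejs A)"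

lemma wrap_sel[simp]:
  "dim (wrap A) = dim A + 1"
  "trans (wrap A) s = mmul (dim A + 1) (blk (dim A) (trans A s) (\<lambda>_ _. 1)) (rot (init A) (dim A) 0 (-1))"
  "init (wrap A) = dim A"
  "accs (wrap A) = accs A"
  "rejs (wrap A) = rejs A"
  by (simp_all add: wrap_def)

lemma non_wrap:
  assumes "wf_mmqfa A"
  shows "non_states (wrap A) = non_states A \<union> {dim A}"
  using assms unfolding non_states_def wf_mmqfa_def by auto

lemma unitary_one: "unitary_mat 1 (\<lambda>_ _. 1)"
  by (simp add: unitary_mat_def)

lemma wf_wrap:
  assumes A: "wf_mmqfa A"
  shows "wf_mmqfa (wrap A)"
proof -
  have iA: "init A < dim A" using A by (simp add: wf_mmqfa_def)
  have "unitary_mat (dim A + 1) (trans (wrap A) s)" for s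
  proof -
    have u1: "unitary_mat (dim A + 1) (blk (dim A) (trans A s) (\<lambda>_ _. 1))"
      using unitary_blk[of "dim A" "trans A s" 1 "\<lambda>_ _. 1"] A unitary_one by (simp add: wf_mmqfa_def)
    have u2: "unitary_mat (dim A + 1) (rot (init A) (dim A) 0 (-1))"
      using iA by (intro unitary_rot) auto
    show ?thesis using unitary_mmul[OF u1 u2] by simp
  qed
  then show ?thesis using A unfolding wf_mmqfa_def by auto
qed

lemma ds_zero: "(\<forall>i\<ge>n1. z i = 0) \<Longrightarrow> ds n1 n2 z (\<lambda>_. 0) = z"
  by (rule ext) (auto simp: ds_def)

lemma mat_vec_one_zero: "mat_vec (Suc 0) (\<lambda>_ _. 1) (\<lambda>_. 0) = (\<lambda>_. 0)"
  by (rule ext) (simp add: mat_vec_def)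

lemma norm2_Suc: "norm2 (Suc n) v = norm2 n v + (cmod (v n))^2"
  by (simp add: norm2_def)

lemma run_wrap:
  assumes A: "wf_mmqfa A" and ni: "init A \<notin> non_states A"
  shows "fst (run (wrap A) ss) = mat_vec (dim A + 1) (rot (init A) (dim A) 0 1) (fst (run A ss))
       \<and> fst (snd (run (wrap A) ss)) = fst (snd (run A ss))"
proof (induct ss rule: rev_induct)
  case Nil
  have iA: "init A < dim A" using A by (simp add: wf_mmqfa_def)
  have "init_vec (wrap A) = mat_vec (dim A + 1) (rot (init A) (dim A) 0 1) (init_vec A)"
  proof
    fix i show "init_vec (wrap A) i = mat_vec (dim A + 1) (rot (init A) (dim A) 0 1) (init_vec A) i"
      using iA by (subst mat_vec_rot) (auto simp: init_vec_def)
  qed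
  then show ?case by (simp add: run_Nil)
next
  case (snoc s ss)
  define n where "n = dim A"
  define a where "a = init A"
  have an: "a < n" using A by (simp add: wf_mmqfa_def a_def n_def)
  obtain psi q2 q3 where rA: "run A ss = (psi, q2, q3)" by (cases "run A ss") auto
  have supp: "\<forall>i\<ge>n. psi i = 0" using run_supp[OF A, of _ ss] rA by (simp add: n_def)
  obtain p1 p2 p3 where rW: "run (wrap A) ss = (p1, p2, p3)" by (cases "run (wrap A) ss") auto
  have p1: "p1 = mat_vec (n+1) (rot a n 0 1) psi" and p2: "p2 = q2"
    using snoc rW rA by (auto simp: a_def n_def)
  define z where "z = mat_vec n (trans A s) psi"
  have zs: "\<forall>i\<ge>n. z i = 0" by (simp add: z_def mat_vec_def)
  have inv: "mat_vec (n+1) (rot a n 0 (-1)) (mat_vec (n+1) (rot a n 0 1) psi) = psi"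
    using an supp by (intro rot_inv) auto
  have key: "mat_vec (n+1) (trans (wrap A) s) p1 = z"
  proof -
    have tw: "trans (wrap A) s = mmul (n+1) (blk n (trans A s) (\<lambda>_ _. 1)) (rot a n 0 (-1))"
      by (simp add: n_def a_def)
    have "mat_vec (n+1) (trans (wrap A) s) p1
        = mat_vec (n+1) (blk n (trans A s) (\<lambda>_ _. 1)) psi"
      by (simp only: tw p1 mat_vec_mmul inv)
    also have "psi = ds n 1 psi (\<lambda>_. 0)" using ds_zero[OF supp] by simp
    also have "mat_vec (n+1) (blk n (trans A s) (\<lambda>_ _. 1)) (ds n 1 psi (\<lambda>_. 0))
       = ds n 1 (mat_vec n (trans A s) psi) (mat_vec 1 (\<lambda>_ _. 1) (\<lambda>_. 0))"
      by (rule mat_vec_blk)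
    also have "\<dots> = z" unfolding z_def[symmetric] using ds_zero[OF zs] by (simp add: mat_vec_one_zero)
    finally show ?thesis .
  qed
  have nw: "non_states (wrap A) = non_states A \<union> {n}" using non_wrap[OF A] by (simp add: n_def)
  have nsub: "non_states A \<subseteq> {..<n}" by (auto simp: non_states_def n_def)
  have asub: "accs A \<subseteq> {..<n}" using A by (auto simp: wf_mmqfa_def n_def)
  have f1: "proj (non_states (wrap A)) z = proj (non_states A) z"
    using zs by (auto simp: nw proj_def)
  have f2: "mat_vec (n+1) (rot a n 0 1) (proj (non_states A) z) = proj (non_states A) z"
    using an ni nsub by (intro rot_fix) (auto simp: proj_def a_def)
  have f3: "norm2 (n+1) (proj (accs A) z) = norm2 n (proj (accs A) z)"
    using asub by (auto simp: norm2_Suc proj_def)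
  show ?case
    using key f1 f2 f3 p2
    by (simp add: run_snoc rW rA step_def Let_def z_def n_def a_def)
qed

lemma acc_wrap:
  assumes A: "wf_mmqfa A" and ni: "init A \<notin> non_states A"
  shows "acc_prob (wrap A) x = acc_prob A x"
  using run_wrap[OF A ni, of "map Some x @ [None]"] by (simp add: acc_prob_def)

definition nrm :: "'a mmqfa \<Rightarrow> 'a mmqfa" where
  "nrm A = (if init A \<in> non_states A then A else wrap A)"

lemma nrm_props:
  assumes A: "wf_mmqfa A"
  shows "wf_mmqfa (nrm A) \<and> init (nrm A) \<in> non_states (nrm A) \<and> (\<forall>x. acc_prob (nrm A) x = acc_prob A x)"
  using A wf_wrap[OF A] acc_wrap[OF A] non_wrap[OF A] by (auto simp: nrm_def)


definition dsum :: "'a mmqfa \<Rightarrow> 'a mmqfa \<Rightarrow> real \<Rightarrow> real \<Rightarrow> 'a mmqfa" where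
  "dsum A B c s = MMQFA (dim A + dim B)
     (\<lambda>\<sigma>. mmul (dim A + dim B) (rot (init A) (dim A + init B) (of_real c) (- of_real s))
        (mmul (dim A + dim B) (blk (dim A) (trans A \<sigma>) (trans B \<sigma>)) (rot (init A) (dim A + init B) (of_real c) (of_real s))))
     (init A) (accs A \<union> (\<lambda>i. dim A + i) ` accs B) (rejs A \<union> (\<lambda>i. dim A + i) ` rejs B)"

lemma dsum_sel[simp]:
  "dim (dsum A B c s) = dim A + dim B"
  "trans (dsum A B c s) \<sigma> = mmul (dim A + dim B) (rot (init A) (dim A + init B) (of_real c) (- of_real s))
        (mmul (dim A + dim B) (blk (dim A) (trans A \<sigma>) (trans B \<sigma>)) (rot (init A) (dim A + init B) (of_real c) (of_real s)))"
  "init (dsum A B c s) = init A"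
  "accs (dsum A B c s) = accs A \<union> (\<lambda>i. dim A + i) ` accs B"
  "rejs (dsum A B c s) = rejs A \<union> (\<lambda>i. dim A + i) ` rejs B"
  by (simp_all add: dsum_def)

lemma img_shift: "(x \<in> (\<lambda>i. (n1::nat) + i) ` S) = (n1 \<le> x \<and> x - n1 \<in> S)"
  by force

lemma non_dsum:
  assumes A: "wf_mmqfa A" and B: "wf_mmqfa B"
  shows "non_states (dsum A B c s) = non_states A \<union> (\<lambda>i. dim A + i) ` non_states B"
proof -
  have "x \<in> non_states (dsum A B c s) \<longleftrightarrow> x \<in> non_states A \<union> (\<lambda>i. dim A + i) ` non_states B" for x
  proof (cases "x < dim A")
    case True
    then show ?thesis by (auto simp: non_states_def img_shift)
  next
    case False
    then show ?thesis using A by (auto simp: non_states_def img_shift wf_mmqfa_def)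
  qed
  then show ?thesis by blast
qed

lemma cs_complex: "c^2 + s^2 = (1::real) \<Longrightarrow> complex_of_real c * complex_of_real c + complex_of_real s * complex_of_real s = 1"
  by (metis of_real_add of_real_mult of_real_1 power2_eq_square)

lemma wf_dsum:
  assumes A: "wf_mmqfa A" and B: "wf_mmqfa B" and cs: "c^2 + s^2 = (1::real)"
  shows "wf_mmqfa (dsum A B c s)"
proof -
  have iA: "init A < dim A" and iB: "init B < dim B" using A B by (auto simp: wf_mmqfa_def)
  have "unitary_mat (dim A + dim B) (trans (dsum A B c s) \<sigma>)" for \<sigma>
  proof -
    have u0: "unitary_mat (dim A + dim B) (blk (dim A) (trans A \<sigma>) (trans B \<sigma>))"
      using A B by (intro unitary_blk) (auto simp: wf_mmqfa_def)
    have u1: "unitary_mat (dim A + dim B) (rot (init A) (dim A + init B) (of_real c) (of_real s))"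
      using iA iB cs_complex[OF cs] by (intro unitary_rot) auto
    have u2: "unitary_mat (dim A + dim B) (rot (init A) (dim A + init B) (of_real c) (- of_real s))"
      using iA iB cs_complex[OF cs] by (intro unitary_rot) auto
    show ?thesis using unitary_mmul[OF u2 unitary_mmul[OF u0 u1]] by simp
  qed
  moreover have "accs A \<inter> (\<lambda>i. dim A + i) ` rejs B = {}" "rejs A \<inter> (\<lambda>i. dim A + i) ` accs B = {}"
    using A by (auto simp: wf_mmqfa_def)
  moreover have "(\<lambda>i. dim A + i) ` accs B \<inter> (\<lambda>i. dim A + i) ` rejs B = {}"
    using B by (auto simp: wf_mmqfa_def)
  ultimately show ?thesis using A B unfolding wf_mmqfa_def by auto
qed

lemma run_dsum:
  assumes A: "wf_mmqfa A" and B: "wf_mmqfa B" and cs: "c^2 + s^2 = (1::real)"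
    and nA: "init A \<in> non_states A" and nB: "init B \<in> non_states B"
  shows "fst (run (dsum A B c s) ss) = mat_vec (dim A + dim B) (rot (init A) (dim A + init B) (of_real c) (- of_real s))
            (ds (dim A) (dim B) (sc (of_real c) (fst (run A ss))) (sc (of_real s) (fst (run B ss))))
       \<and> fst (snd (run (dsum A B c s) ss)) = c^2 * fst (snd (run A ss)) + s^2 * fst (snd (run B ss))"
proof (induct ss rule: rev_induct)
  case Nil
  have iA: "init A < dim A" and iB: "init B < dim B" using A B by (auto simp: wf_mmqfa_def)
  have cc: "complex_of_real c * complex_of_real c + complex_of_real s * complex_of_real s = 1"
    by (rule cs_complex[OF cs])
  have "init_vec (dsum A B c s) = mat_vec (dim A + dim B) (rot (init A) (dim A + init B) (of_real c) (- of_real s))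
            (ds (dim A) (dim B) (sc (of_real c) (init_vec A)) (sc (of_real s) (init_vec B)))"
  proof
    fix i
    show "init_vec (dsum A B c s) i = mat_vec (dim A + dim B) (rot (init A) (dim A + init B) (of_real c) (- of_real s))
            (ds (dim A) (dim B) (sc (of_real c) (init_vec A)) (sc (of_real s) (init_vec B))) i"
      using iA iB cc
      by (subst mat_vec_rot) (auto simp: init_vec_def ds_def sc_def algebra_simps)
  qed
  then show ?case by (simp add: run_Nil)
next
  case (snoc \<sigma> ss)
  define n1 where "n1 = dim A"
  define n2 where "n2 = dim B"
  define a where "a = init A"
  define b where "b = dim A + init B"
  define c' where "c' = complex_of_real c"
  define s' where "s' = complex_of_real s"
  have iA: "a < n1" and iB: "init B < n2" using A B by (auto simp: wf_mmqfa_def a_def n1_def n2_def)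
  have ab: "a < n1 + n2" "b < n1 + n2" "a \<noteq> b" using iA iB by (auto simp: b_def n1_def n2_def)
  have cc: "c' * c' + s' * s' = 1" unfolding c'_def s'_def by (rule cs_complex[OF cs])
  have cc2: "c' * c' + (- s') * (- s') = 1" using cc by simp
  obtain pA qA rA where RA: "run A ss = (pA, qA, rA)" by (cases "run A ss") auto
  obtain pB qB rB where RB: "run B ss = (pB, qB, rB)" by (cases "run B ss") auto
  obtain p1 p2 p3 where RD: "run (dsum A B c s) ss = (p1, p2, p3)" by (cases "run (dsum A B c s) ss") auto
  define psi where "psi = ds n1 n2 (sc c' pA) (sc s' pB)"
  have psupp: "\<forall>i\<ge>n1+n2. psi i = 0" by (simp add: psi_def ds_def)
  have p1: "p1 = mat_vec (n1+n2) (rot a b c' (-s')) psi" and p2: "p2 = c^2 * qA + s^2 * qB"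
    using snoc RA RB RD by (auto simp: psi_def n1_def n2_def a_def b_def c'_def s'_def)
  define zA where "zA = mat_vec n1 (trans A \<sigma>) pA"
  define zB where "zB = mat_vec n2 (trans B \<sigma>) pB"
  define z where "z = ds n1 n2 (sc c' zA) (sc s' zB)"
  have inv: "mat_vec (n1+n2) (rot a b c' s') (mat_vec (n1+n2) (rot a b c' (-s')) psi) = psi"
    using rot_inv[OF ab cc2 psupp] by simp
  have td: "trans (dsum A B c s) \<sigma> = mmul (n1+n2) (rot a b c' (-s')) (mmul (n1+n2) (blk n1 (trans A \<sigma>) (trans B \<sigma>)) (rot a b c' s'))"
    by (simp add: n1_def n2_def a_def b_def c'_def s'_def)
  have key: "mat_vec (n1+n2) (trans (dsum A B c s) \<sigma>) p1 = mat_vec (n1+n2) (rot a b c' (-s')) z"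
  proof -
    have "mat_vec (n1+n2) (trans (dsum A B c s) \<sigma>) p1 = mat_vec (n1+n2) (rot a b c' (-s')) (mat_vec (n1+n2) (blk n1 (trans A \<sigma>) (trans B \<sigma>)) psi)"
      by (simp only: td p1 mat_vec_mmul inv)
    also have "mat_vec (n1+n2) (blk n1 (trans A \<sigma>) (trans B \<sigma>)) psi = z"
      by (simp add: psi_def z_def mat_vec_blk mat_vec_sc zA_def zB_def)
    finally show ?thesis .
  qed
  have ND: "non_states (dsum A B c s) = non_states A \<union> (\<lambda>i. n1 + i) ` non_states B"
    using non_dsum[OF A B] by (simp add: n1_def)
  have nsub: "non_states A \<subseteq> {..<n1}" by (auto simp: non_states_def n1_def)
  have asub: "accs A \<subseteq> {..<n1}" using A by (auto simp: wf_mmqfa_def n1_def)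
  have aN: "a \<in> non_states (dsum A B c s)" "b \<in> non_states (dsum A B c s)"
    using nA nB unfolding ND by (auto simp: a_def b_def n1_def)
  have aAcc: "a \<notin> accs (dsum A B c s)" "b \<notin> accs (dsum A B c s)"
  proof -
    have "init A \<notin> accs A" "init B \<notin> accs B" using nA nB by (auto simp: non_states_def)
    then show "a \<notin> accs (dsum A B c s)" "b \<notin> accs (dsum A B c s)"
      using iA asub by (auto simp: a_def b_def n1_def img_shift)
  qed
  have AD: "accs (dsum A B c s) = accs A \<union> (\<lambda>i. n1 + i) ` accs B" by (simp add: n1_def)
  have urt: "unitary_mat (n1+n2) (rot a b c' (-s'))"
    using ab cc2 by (intro unitary_rot) (auto simp: c'_def s'_def)
  have f1: "proj (non_states (dsum A B c s)) (mat_vec (n1+n2) (rot a b c' (-s')) z)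
      = mat_vec (n1+n2) (rot a b c' (-s')) (ds n1 n2 (sc c' (proj (non_states A) zA)) (sc s' (proj (non_states B) zB)))"
    using aN by (simp add: proj_rot[OF ab] z_def ND proj_ds[OF nsub] proj_sc)
  have f2: "norm2 (n1+n2) (proj (accs (dsum A B c s)) (mat_vec (n1+n2) (rot a b c' (-s')) z))
      = c^2 * norm2 n1 (proj (accs A) zA) + s^2 * norm2 n2 (proj (accs B) zB)"
  proof -
    have f2a: "proj (accs (dsum A B c s)) (mat_vec (n1+n2) (rot a b c' (-s')) z)
       = mat_vec (n1+n2) (rot a b c' (-s')) (proj (accs (dsum A B c s)) z)"
      using aAcc by (intro proj_rot[OF ab]) auto
    have f2c: "proj (accs (dsum A B c s)) z = ds n1 n2 (sc c' (proj (accs A) zA)) (sc s' (proj (accs B) zB))"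
      unfolding AD z_def by (simp add: proj_ds[OF asub] proj_sc)
    have f2d: "norm2 (n1+n2) (ds n1 n2 (sc c' (proj (accs A) zA)) (sc s' (proj (accs B) zB)))
       = c^2 * norm2 n1 (proj (accs A) zA) + s^2 * norm2 n2 (proj (accs B) zB)"
      by (simp add: norm2_ds norm2_sc c'_def s'_def)
    show ?thesis unfolding f2a norm2_unitary[OF urt] f2c f2d ..
  qed
  show ?case
    using key f1 f2 p2
    by (simp add: run_snoc RA RB RD step_def Let_def zA_def zB_def n1_def n2_def a_def b_def c'_def s'_def
        algebra_simps)
qed

lemma acc_dsum:
  assumes A: "wf_mmqfa A" and B: "wf_mmqfa B" and cs: "c^2 + s^2 = (1::real)"
    and nA: "init A \<in> non_states A" and nB: "init B \<in> non_states B"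
  shows "acc_prob (dsum A B c s) x = c^2 * acc_prob A x + s^2 * acc_prob B x"
  using run_dsum[OF A B cs nA nB, of "map Some x @ [None]"] by (simp add: acc_prob_def)


lemma norm2_nonneg: "norm2 n v \<ge> 0"
  by (simp add: norm2_def sum_nonneg)

lemma run_pa_nonneg: "fst (snd (run M ss)) \<ge> 0"
proof (induct ss rule: rev_induct)
  case Nil
  then show ?case by (simp add: run_Nil)
next
  case (snoc s ss)
  obtain p q r where R: "run M ss = (p, q, r)" by (cases "run M ss") auto
  show ?case using snoc R norm2_nonneg[of "dim M"] by (simp add: run_snoc step_def Let_def add_nonneg_nonneg)
qed

lemma acc_nonneg: "acc_prob M x \<ge> 0"
  by (simp add: acc_prob_def run_pa_nonneg)

lemma sep_pow:
  fixes a b a' b' :: real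
  assumes "0 < b" "b < a" "0 < b'" "b' < a'"
  shows "\<exists>k. (b/a)^(Suc k) < 1/4 \<and> (b'/a')^(Suc k) < 1/4"
proof -
  define r where "r = max (b/a) (b'/a')"
  have r1: "r < 1" using assms by (simp add: r_def)
  have r0: "0 \<le> r" using assms by (simp add: r_def le_max_iff_disj)
  obtain n where n: "r^n < 1/4" using real_arch_pow_inv[of "1/4" r] r1 by auto
  have h0: "r^(Suc n) \<le> r^n" using r0 r1 by (simp add: power_Suc mult_left_le_one_le)
  have h1: "(b/a)^(Suc n) \<le> r^(Suc n)"
    by (rule power_mono) (use assms in \<open>auto simp: r_def\<close>)
  have h2: "(b'/a')^(Suc n) \<le> r^(Suc n)"
    by (rule power_mono) (use assms in \<open>auto simp: r_def\<close>)
  have "(b/a)^(Suc n) < 1/4" using h0 h1 n by linarith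
  moreover have "(b'/a')^(Suc n) < 1/4" using h0 h2 n by linarith
  ultimately show ?thesis by blast
qed

theorem lemma4p11:
  fixes M M' :: "'a mmqfa" and L L' :: "'a list set"
  assumes "wf_mmqfa M" and "end_decisive M" and "accepts_bounded M L"
    and "wf_mmqfa M'" and "end_decisive M'" and "accepts_bounded M' L'"
  shows "\<exists>M'' :: 'a mmqfa. wf_mmqfa M'' \<and> accepts_bounded M'' (L \<union> L')"
proof (cases "L = UNIV \<or> L' = UNIV")
  case True
  have "accepts_bounded M UNIV"
    unfolding accepts_bounded_def
    by (rule exI[of _ "-2"], rule exI[of _ 1]) (auto intro: less_le_trans[OF _ acc_nonneg])
  then show ?thesis using True assms(1) by auto
next
  case False
  then obtain x0 x1 where x0: "x0 \<notin> L" and x1: "x1 \<notin> L'" by auto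
  obtain lam eps where le: "eps > 0" "\<forall>x. x \<in> L \<longrightarrow> acc_prob M x > lam + eps"
      "\<forall>x. x \<notin> L \<longrightarrow> acc_prob M x < lam - eps"
    using assms(3) unfolding accepts_bounded_def by blast
  obtain lam' eps' where le': "eps' > 0" "\<forall>x. x \<in> L' \<longrightarrow> acc_prob M' x > lam' + eps'"
      "\<forall>x. x \<notin> L' \<longrightarrow> acc_prob M' x < lam' - eps'"
    using assms(6) unfolding accepts_bounded_def by blast
  define a where "a = lam + eps"
  define b where "b = lam - eps"
  define a' where "a' = lam' + eps'"
  define b' where "b' = lam' - eps'"
  have b0: "0 < b" using le(3) x0 acc_nonneg[of M x0] by (force simp: b_def)
  have b0': "0 < b'" using le'(3) x1 acc_nonneg[of M' x1] by (force simp: b'_def)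
  have ba: "b < a" "b' < a'" using le(1) le'(1) by (auto simp: a_def b_def a'_def b'_def)
  have a0: "0 < a" "0 < a'" using b0 b0' ba by auto
  obtain k where k: "(b/a)^(Suc k) < 1/4" "(b'/a')^(Suc k) < 1/4"
    using sep_pow[OF b0 ba(1) b0' ba(2)] by blast
  define m where "m = Suc k"
  define u where "u = a^m"
  define u' where "u' = a'^m"
  have u0: "0 < u" "0 < u'" using a0 by (auto simp: u_def u'_def)
  define w1 where "w1 = u' / (u + u')"
  define w2 where "w2 = u / (u + u')"
  have w0: "0 < w1" "0 < w2" using u0 by (auto simp: w1_def w2_def)
  have w12: "w1 + w2 = 1"
  proof -
    have "w1 + w2 = (u' + u) / (u + u')" by (simp add: w1_def w2_def add_divide_distrib)
    also have "\<dots> = 1" using u0 by (simp add: add.commute)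
    finally show ?thesis .
  qed
  define c where "c = sqrt w1"
  define s where "s = sqrt w2"
  have c2: "c^2 = w1" "s^2 = w2" using w0 by (auto simp: c_def s_def)
  have cs: "c^2 + s^2 = 1" using c2 w12 by simp
  define T where "T = u * u' / (u + u')"
  have T0: "0 < T" using u0 by (simp add: T_def)
  have T1: "w1 * u = T" "w2 * u' = T" by (simp_all add: T_def w1_def w2_def ac_simps)
  obtain PA where PA: "wf_mmqfa (tpow M k)" "end_decisive (tpow M k)" "\<forall>x. acc_prob (tpow M k) x = acc_prob M x ^ Suc k"
    using tpow_props[OF assms(1,2)] by blast
  obtain PB where PB: "wf_mmqfa (tpow M' k)" "end_decisive (tpow M' k)" "\<forall>x. acc_prob (tpow M' k) x = acc_prob M' x ^ Suc k"
    using tpow_props[OF assms(4,5)] by blast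
  define A where "A = nrm (tpow M k)"
  define B where "B = nrm (tpow M' k)"
  have A: "wf_mmqfa A" "init A \<in> non_states A" "\<And>x. acc_prob A x = acc_prob M x ^ m"
    using nrm_props[OF PA(1)] PA(3) by (auto simp: A_def m_def)
  have B: "wf_mmqfa B" "init B \<in> non_states B" "\<And>x. acc_prob B x = acc_prob M' x ^ m"
    using nrm_props[OF PB(1)] PB(3) by (auto simp: B_def m_def)
  define D where "D = dsum A B c s"
  have WD: "wf_mmqfa D" unfolding D_def by (rule wf_dsum[OF A(1) B(1) cs])
  have AD: "acc_prob D x = w1 * acc_prob M x ^ m + w2 * acc_prob M' x ^ m" for x
    unfolding D_def acc_dsum[OF A(1) B(1) cs A(2) B(2)] A(3) B(3) c2 ..
  have "accepts_bounded D (L \<union> L')"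
    unfolding accepts_bounded_def
  proof (rule exI[of _ "3 * T / 4"], rule exI[of _ "T / 4"], intro conjI allI impI)
    show "T / 4 > 0" using T0 by simp
  next
    fix x assume x: "x \<in> L \<union> L'"
    have nn: "0 \<le> w1 * acc_prob M x ^ m" "0 \<le> w2 * acc_prob M' x ^ m"
      using w0 acc_nonneg[of M x] acc_nonneg[of M' x] by auto
    show "acc_prob D x > 3 * T / 4 + T / 4"
    proof (cases "x \<in> L")
      case True
      then have "a < acc_prob M x" using le(2) by (simp add: a_def)
      then have "u < acc_prob M x ^ m" unfolding u_def using a0 by (intro power_strict_mono) (auto simp: m_def)
      then have "T < w1 * acc_prob M x ^ m" using T1 w0 by (metis mult_strict_left_mono)
      then show ?thesis using nn by (simp add: AD)
    next
      case False
      then have "x \<in> L'" using x by auto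
      then have "a' < acc_prob M' x" using le'(2) by (simp add: a'_def)
      then have "u' < acc_prob M' x ^ m" unfolding u'_def using a0 by (intro power_strict_mono) (auto simp: m_def)
      then have "T < w2 * acc_prob M' x ^ m" using T1 w0 by (metis mult_strict_left_mono)
      then show ?thesis using nn by (simp add: AD)
    qed
  next
    fix x assume x: "x \<notin> L \<union> L'"
    have "acc_prob M x < b" using le(3) x by (simp add: b_def)
    then have p1: "acc_prob M x ^ m < b ^ m" using acc_nonneg[of M x] by (intro power_strict_mono) (auto simp: m_def)
    have "acc_prob M' x < b'" using le'(3) x by (simp add: b'_def)
    then have p2: "acc_prob M' x ^ m < b' ^ m" using acc_nonneg[of M' x] by (intro power_strict_mono) (auto simp: m_def)
    have e1: "w1 * b ^ m = T * (b/a)^m" using T1 a0 by (simp add: u_def power_divide field_simps)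
    have e2: "w2 * b' ^ m = T * (b'/a')^m" using T1 a0 by (simp add: u'_def power_divide field_simps)
    have "acc_prob D x < w1 * b ^ m + w2 * b' ^ m"
      unfolding AD using p1 p2 w0 by (intro add_strict_mono mult_strict_left_mono) auto
    also have "\<dots> = T * ((b/a)^m + (b'/a')^m)" using e1 e2 by (simp add: algebra_simps)
    also have "\<dots> < T * (1/2)"
    proof -
      have "(b/a)^m + (b'/a')^m < 1/2" using k unfolding m_def by linarith
      then show ?thesis using T0 by (intro mult_strict_left_mono) auto
    qed
    finally show "acc_prob D x < 3 * T / 4 - T / 4" by simp
  qed
  then show ?thesis using WD by blast
qed

end
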